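(* Assume the setting of the context. Then: (1) $y$ admits a constant arithmetic subsequence (there exist $p\ge1$, $k\in\mathbb Z$, $b\in\mathcal B$ with $y_{k+np}=b$ for all $n\in\mathbb Z$) if and only if some vertex $\mathcal C$ of $G(\sigma)$ satisfies that $\phi(\mathcal C)$ is a singleton; (2) $y$ is periodic if and only if there exists $N$ such that every walk of length at least $N$ in $G(\sigma)$ ends at a vertex $\mathcal C$ with $\phi(\mathcal C)$ a singleton.
   Context: Let $\sigma:\mathcal A^*\to\mathcal A^*$ be a primitive substitution of constant length $l\ge2$, $x\in\mathcal A^{\mathbb Z}$ an admissible two-sided fixed point of $\sigma$ (so $x_{lj+i}=\sigma(x_j)_i$, $w_i$ being the $i$-th letter of $w$ indexed from $0$), $\phi:\mathcal A\to\mathcal B$ a coding, $y=\phi(x)$; the subshift generated by $x$ is assumed non-periodic. Height $h=\max\{n\ge1 : \gcd(n,l)=1,\ n\mid g_0\}$, $g_0=\gcd\{n\ge1:x_n=x_0\}$. For $0\le i<h$, $\mathcal A_i=\{x_{i+nh}:n\in\mathbb Z\}$. Graph $G(\sigma)$: vertices are subsets of $\mathcal A$; for a subset $\mathcal C$ and $0\le i<l$ there is an edge labelled $i$ from $\mathcal C$ to $\{\sigma(b)_i : b\in\mathcal C\}$; $G(\sigma)$ is restricted to vertices reachable from $\mathcal A_0,\dots,\mathcal A_{h-1}$. $\phi(\mathcal C)=\{\phi(c):c\in\mathcal C\}$. *)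

theory Defs
  imports Main
begin

text \<open>Substitutions are maps \<open>\<sigma> :: 'a \<Rightarrow> 'a list\<close> on a finite alphabet (the type \<open>'a\<close>);
  letters of a word are indexed from 0 via \<open>!\<close>.\<close>

definition subst_word :: "('a \<Rightarrow> 'a list) \<Rightarrow> 'a list \<Rightarrow> 'a list" where
  "subst_word \<sigma> w = concat (map \<sigma> w)"

definition subst_iter :: "('a \<Rightarrow> 'a list) \<Rightarrow> nat \<Rightarrow> 'a \<Rightarrow> 'a list" where
  "subst_iter \<sigma> k a = (subst_word \<sigma> ^^ k) [a]"

definition constant_length :: "('a \<Rightarrow> 'a list) \<Rightarrow> nat \<Rightarrow> bool" where
  "constant_length \<sigma> l \<longleftrightarrow> (\<forall>a. length (\<sigma> a) = l)"

definition primitive :: "('a \<Rightarrow> 'a list) \<Rightarrow> bool" where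
  "primitive \<sigma> \<longleftrightarrow> (\<exists>k\<ge>1. \<forall>a b. b \<in> set (subst_iter \<sigma> k a))"

definition subst_language :: "('a \<Rightarrow> 'a list) \<Rightarrow> 'a list set" where
  "subst_language \<sigma> = {w. \<exists>k a u v. subst_iter \<sigma> k a = u @ w @ v}"

definition window :: "(int \<Rightarrow> 'a) \<Rightarrow> int \<Rightarrow> nat \<Rightarrow> 'a list" where
  "window z m n = map (\<lambda>i. z (m + int i)) [0..<n]"

definition is_fixed_point :: "('a \<Rightarrow> 'a list) \<Rightarrow> nat \<Rightarrow> (int \<Rightarrow> 'a) \<Rightarrow> bool" where
  "is_fixed_point \<sigma> l x \<longleftrightarrow> (\<forall>j::int. \<forall>i<l. x (int l * j + int i) = \<sigma> (x j) ! i)"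

definition admissible :: "('a \<Rightarrow> 'a list) \<Rightarrow> (int \<Rightarrow> 'a) \<Rightarrow> bool" where
  "admissible \<sigma> x \<longleftrightarrow> (\<forall>m n. window x m n \<in> subst_language \<sigma>)"

definition subshift_gen :: "(int \<Rightarrow> 'a) \<Rightarrow> (int \<Rightarrow> 'a) set" where
  "subshift_gen x = {z. \<forall>m n. \<exists>m'. window z m n = window x m' n}"

definition periodic_seq :: "(int \<Rightarrow> 'b) \<Rightarrow> bool" where
  "periodic_seq y \<longleftrightarrow> (\<exists>p::int\<ge>1. \<forall>n. y (n + p) = y n)"

text \<open>A subshift is periodic iff it is finite (i.e. a finite union of orbits of periodic points).\<close>
definition nonperiodic_subshift :: "(int \<Rightarrow> 'a) set \<Rightarrow> bool" where
  "nonperiodic_subshift X \<longleftrightarrow> infinite X"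

definition g0 :: "(int \<Rightarrow> 'a) \<Rightarrow> nat" where
  "g0 x = Gcd {n::nat. n \<ge> 1 \<and> x (int n) = x 0}"

definition height :: "nat \<Rightarrow> (int \<Rightarrow> 'a) \<Rightarrow> nat" where
  "height l x = Max {n::nat. n \<ge> 1 \<and> coprime n l \<and> n dvd g0 x}"

definition height_class :: "nat \<Rightarrow> (int \<Rightarrow> 'a) \<Rightarrow> nat \<Rightarrow> 'a set" where
  "height_class h x i = {x (int i + n * int h) | n. True}"

definition graph_step :: "('a \<Rightarrow> 'a list) \<Rightarrow> nat \<Rightarrow> 'a set \<Rightarrow> 'a set" where
  "graph_step \<sigma> i C = {\<sigma> b ! i | b. b \<in> C}"

inductive_set graph_vertices :: "('a \<Rightarrow> 'a list) \<Rightarrow> nat \<Rightarrow> (int \<Rightarrow> 'a) \<Rightarrow> 'a set set"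
  for \<sigma> l x where
  base: "i < height l x \<Longrightarrow> height_class (height l x) x i \<in> graph_vertices \<sigma> l x"
| step: "C \<in> graph_vertices \<sigma> l x \<Longrightarrow> i < l \<Longrightarrow> graph_step \<sigma> i C \<in> graph_vertices \<sigma> l x"

text \<open>End vertex of the walk starting at \<open>C\<close> following the edge labels \<open>is\<close>
  (its length is \<open>length is\<close>).\<close>
definition walk_end :: "('a \<Rightarrow> 'a list) \<Rightarrow> 'a set \<Rightarrow> nat list \<Rightarrow> 'a set" where
  "walk_end \<sigma> C is = foldl (\<lambda>D i. graph_step \<sigma> i D) C is"

end

theory Submission
  imports Defs "HOL-Number_Theory.Number_Theory"
begin


lemma length_concat_const: "(\<forall>b. length (\<sigma> b) = l) \<Longrightarrow> length (concat (map \<sigma> ws)) = l * length ws"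
  by (induction ws) auto

lemma nth_concat_const:
  assumes "\<forall>b. length (\<sigma> b) = l" "w1 < length ws" "w0 < l"
  shows "concat (map \<sigma> ws) ! (w1 * l + w0) = \<sigma> (ws ! w1) ! w0"
  using assms(2)
proof (induction ws arbitrary: w1)
  case Nil then show ?case by simp
next
  case (Cons a ws)
  show ?case
  proof (cases w1)
    case 0 then show ?thesis using assms by (simp add: nth_append)
  next
    case (Suc k)
    have "concat (map \<sigma> (a # ws)) ! (w1 * l + w0) = concat (map \<sigma> ws) ! (k * l + w0)"
      using assms Suc by (simp add: nth_append algebra_simps)
    also have "\<dots> = \<sigma> (ws ! k) ! w0" using Cons Suc by simp
    finally show ?thesis using Suc by simp
  qed
qed

lemma subst_iter_Suc: "subst_iter \<sigma> (Suc K) a = concat (map \<sigma> (subst_iter \<sigma> K a))"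
  by (simp add: subst_iter_def subst_word_def)

lemma subst_iter_0: "subst_iter \<sigma> 0 a = [a]" by (simp add: subst_iter_def)

lemma length_subst_iter: "constant_length \<sigma> l \<Longrightarrow> length (subst_iter \<sigma> K a) = l ^ K"
  by (induction K) (simp_all add: subst_iter_0 subst_iter_Suc length_concat_const constant_length_def)

lemma factor_lemma: "(l::nat) \<ge> 1 \<Longrightarrow> p \<ge> 1 \<Longrightarrow> \<exists>q K. q \<ge> 1 \<and> coprime q l \<and> p dvd l ^ K * q"
proof (induction p rule: less_induct)
  case (less p)
  show ?case
  proof (cases "coprime p l")
    case True then show ?thesis using less.prems by (intro exI[of _ p] exI[of _ 0]) auto
  next
    case False
    define g where "g = gcd p l"
    have "g \<noteq> 1" using False coprime_iff_gcd_eq_1[of p l] g_def by metis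
    moreover have "g > 0" using less.prems by (simp add: g_def)
    ultimately have g1: "g > 1" by simp
    obtain p' where pp: "p = g * p'" using gcd_dvd1[of p l, unfolded dvd_def] g_def by blast
    have p': "p' < p" "p' \<ge> 1" using pp g1 less.prems by (auto simp: Suc_le_eq)
    then obtain q K where qK: "q \<ge> 1" "coprime q l" "p' dvd l^K * q" using less.IH less.prems(1) by blast
    have "g dvd l" by (simp add: g_def)
    hence "g * p' dvd l * (l^K * q)" using qK(3) by (rule mult_dvd_mono)
    hence "p dvd l^(Suc K) * q" using pp by (simp add: mult.assoc)
    thus ?thesis using qK by blast
  qed
qed




locale fp =
  fixes \<sigma> :: "'a \<Rightarrow> 'a list" and l :: nat and x :: "int \<Rightarrow> 'a"
  assumes prim: "primitive \<sigma>" and cl: "constant_length \<sigma> l" and l2: "l \<ge> 2"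
    and fixp: "is_fixed_point \<sigma> l x" and adm: "admissible \<sigma> x"
begin

abbreviation "h \<equiv> height l x"

lemma fixE: "i < l \<Longrightarrow> x (int l * j + int i) = \<sigma> (x j) ! i"
  using fixp by (simp add: is_fixed_point_def)

lemma x_iter: "w < l ^ K \<Longrightarrow> x (int l ^ K * j + int w) = subst_iter \<sigma> K (x j) ! w"
proof (induction K arbitrary: w)
  case 0 then show ?case by (simp add: subst_iter_0)
next
  case (Suc K)
  define w1 where "w1 = w div l"
  define w0 where "w0 = w mod l"
  have lpos: "l > 0" using l2 by simp
  have w: "w = w1 * l + w0" by (simp add: w1_def w0_def)
  have w0l: "w0 < l" using lpos by (simp add: w0_def)
  have w1l: "w1 < l ^ K" using Suc.prems lpos unfolding w1_def
    by (simp add: less_mult_imp_div_less mult.commute)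
  have "int l ^ Suc K * j + int w = int l * (int l ^ K * j + int w1) + int w0"
    by (simp add: w algebra_simps)
  hence "x (int l ^ Suc K * j + int w) = \<sigma> (x (int l ^ K * j + int w1)) ! w0"
    using fixE[OF w0l] by simp
  also have "\<dots> = \<sigma> (subst_iter \<sigma> K (x j) ! w1) ! w0" using Suc.IH[OF w1l] by simp
  also have "\<dots> = concat (map \<sigma> (subst_iter \<sigma> K (x j))) ! (w1 * l + w0)"
    using nth_concat_const[of \<sigma> l w1 "subst_iter \<sigma> K (x j)" w0] cl w1l w0l
      length_subst_iter[OF cl] by (simp add: constant_length_def)
  also have "\<dots> = subst_iter \<sigma> (Suc K) (x j) ! w" by (simp add: subst_iter_Suc w)
  finally show ?case .
qed

lemma dep: "x j = x j' \<Longrightarrow> w < l ^ K \<Longrightarrow> x (int l ^ K * j + int w) = x (int l ^ K * j' + int w)"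
  using x_iter by simp

lemma letter_in_iter:
  assumes "b \<in> set (subst_iter \<sigma> K a)" "x j = a"
  shows "\<exists>w < l^K. x (int l ^ K * j + int w) = b"
proof -
  obtain w where "w < length (subst_iter \<sigma> K a)" "subst_iter \<sigma> K a ! w = b"
    using assms(1) by (auto simp: in_set_conv_nth)
  thus ?thesis using x_iter assms(2) length_subst_iter[OF cl] by auto
qed

lemma ret_exists: "\<exists>n::nat. n \<ge> 1 \<and> x (int n) = x 0"
proof -
  obtain k where k: "k \<ge> 1" "\<forall>a b. b \<in> set (subst_iter \<sigma> k a)" using prim primitive_def by blast
  then obtain w where "w < l^k" "x (int l ^ k * 1 + int w) = x 0"
    using letter_in_iter[of "x 0" k "x 1" 1] by blast
  moreover have "l ^ k \<ge> 1" using l2 by simp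
  ultimately show ?thesis by (intro exI[of _ "l^k + w"]) auto
qed

lemma g0_pos: "g0 x > 0"
proof -
  obtain n :: nat where n: "n \<ge> 1" "x (int n) = x 0" using ret_exists by blast
  hence "g0 x dvd n" unfolding g0_def by (intro Gcd_dvd) auto
  thus ?thesis using n by (cases "g0 x = 0") auto
qed

lemma height_props:
  "h \<ge> 1 \<and> coprime h l \<and> h dvd g0 x \<and> (\<forall>d. d \<ge> 1 \<longrightarrow> coprime d l \<longrightarrow> d dvd g0 x \<longrightarrow> d dvd h)"
proof -
  let ?H = "{n::nat. n \<ge> 1 \<and> coprime n l \<and> n dvd g0 x}"
  have "?H \<subseteq> {..g0 x}" using g0_pos by (auto intro: dvd_imp_le)
  hence fin: "finite ?H" using finite_subset by blast
  have "1 \<in> ?H" by simp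
  hence hin: "h \<in> ?H" unfolding height_def using fin Max_in by blast
  have hmax: "\<forall>n\<in>?H. n \<le> h" unfolding height_def using fin Max_ge by blast
  have "d dvd h" if d: "d \<ge> 1" "coprime d l" "d dvd g0 x" for d
  proof -
    have "lcm d h \<ge> 1" using d hin by (simp add: Suc_le_eq lcm_pos_nat)
    moreover have "coprime (lcm d h) l"
    proof -
      have "coprime (d * h) l" using d hin by simp
      moreover have "lcm d h dvd d * h" by (rule lcm_least) auto
      ultimately show ?thesis using coprime_imp_coprime dvd_trans by blast
    qed
    moreover have "lcm d h dvd g0 x" using d hin by (simp add: lcm_least)
    ultimately have "lcm d h \<le> h" using hmax by blast
    moreover have "h dvd lcm d h" by simp
    moreover have "h \<le> lcm d h" using \<open>h dvd lcm d h\<close> \<open>lcm d h \<ge> 1\<close> by (intro dvd_imp_le) auto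
    ultimately have "lcm d h = h" by simp
    moreover have "d dvd lcm d h" by simp
    ultimately show ?thesis by simp
  qed
  thus ?thesis using hin by blast
qed

end


context fp begin

lemma nonneg_rep: "\<exists>s\<ge>0. x s = x J \<and> int (g0 x) dvd (s - J)"
proof (cases "J \<ge> 0")
  case True then show ?thesis by (intro exI[of _ J]) auto
next
  case False
  define n where "n = nat (-J) + 1"
  have "window x J n \<in> subst_language \<sigma>" using adm admissible_def by blast
  then obtain k a u v where eq: "subst_iter \<sigma> k a = u @ window x J n @ v"
    by (auto simp: subst_language_def)
  obtain k1 where k1: "\<forall>a b. b \<in> set (subst_iter \<sigma> k1 a)" using prim primitive_def by blast
  then obtain w' where "w' < l^k1" "x (int l ^ k1 * 0 + int w') = a"
    using letter_in_iter[of a k1 "x 0" 0] by blast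
  define j0 where "j0 = int w'"
  have xj0: "x j0 = a" using \<open>x (int l ^ k1 * 0 + int w') = a\<close> by (simp add: j0_def)
  define s where "s = int l ^ k * j0 + int (length u)"
  have key: "x (s + int i) = x (J + int i)" if i: "i < n" for i
  proof -
    have len: "length u + i < l ^ k" using length_subst_iter[OF cl, of k a] eq i
      by (simp add: window_def)
    have "x (s + int i) = x (int l ^ k * j0 + int (length u + i))" by (simp add: s_def add.assoc)
    also have "\<dots> = subst_iter \<sigma> k a ! (length u + i)" using x_iter[OF len] xj0 by simp
    also have "\<dots> = window x J n ! i" using i eq by (simp add: nth_append window_def)
    also have "\<dots> = x (J + int i)" using i by (simp add: window_def)
    finally show ?thesis .
  qed
  have s0: "s \<ge> 0" by (simp add: s_def j0_def)
  have "x s = x J" using key[of 0] by (simp add: n_def)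
  moreover have "x (s - J) = x 0" using key[of "nat (-J)"] False by (simp add: n_def)
  moreover have "s - J \<ge> 1" using s0 False by simp
  ultimately have "g0 x dvd nat (s - J)" unfolding g0_def
    by (intro Gcd_dvd) auto
  hence "int (g0 x) dvd int (nat (s - J))" by (simp only: int_dvd_int_iff)
  moreover have "int (nat (s - J)) = s - J" using \<open>s - J \<ge> 1\<close> by simp
  ultimately have "int (g0 x) dvd (s - J)" by simp
  thus ?thesis using s0 \<open>x s = x J\<close> by blast
qed

lemma bigpow:
  assumes "q \<ge> 1" "coprime q l"
  shows "\<exists>K. [int l ^ K = 1] (mod int q) \<and> s < l ^ K"
proof -
  define ot where "ot = totient q"
  have o1: "ot \<ge> 1" using assms by (simp add: ot_def Suc_le_eq)
  have "[l ^ ot = 1] (mod q)" using euler_theorem[of l q] assms by (simp add: ot_def coprime_commute)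
  hence c: "[(l ^ ot) ^ (s+1) = 1] (mod q)" using cong_pow[of "l ^ ot" 1 q "s+1"] by simp
  define K where "K = ot * (s + 1)"
  have "[int ((l ^ ot) ^ (s+1)) = int 1] (mod int q)" using c by (simp only: cong_int_iff)
  hence c1: "[int l ^ K = 1] (mod int q)" unfolding K_def by (simp only: of_nat_power of_nat_1 power_mult)
  have c2: "s < (2::nat) ^ (s+1)" by (induction s) auto
  have "1 * (s+1) \<le> ot * (s+1)" using o1 by (rule mult_le_mono1)
  hence c3: "(2::nat) ^ (s+1) \<le> 2 ^ K" unfolding K_def by (intro power_increasing) auto
  have c4: "(2::nat) ^ K \<le> l ^ K" using l2 by (intro power_mono) auto
  have "s < l ^ K" using c2 c3 c4 by linarith
  thus ?thesis using c1 by blast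
qed

lemma E:
  assumes q: "q \<ge> 1" "coprime q l" and hd: "int h dvd (J - J0)"
  shows "\<exists>J'. int q dvd (J' - J0) \<and> x J' = x J"
proof -
  define Z where "Z = {j::int. \<exists>t\<ge>0. x t = x 0 \<and> [t = j] (mod int q)}"
  have Zmem: "j \<in> Z \<longleftrightarrow> (\<exists>t. t \<ge> 0 \<and> x t = x 0 \<and> [t = j] (mod int q))" for j
    by (simp add: Z_def)
  have Z0: "0 \<in> Z" unfolding Zmem by (rule exI[of _ 0]) simp
  have Zcong: "j' \<in> Z" if "j \<in> Z" "[j = j'] (mod int q)" for j j'
  proof -
    have "\<exists>t. t \<ge> 0 \<and> x t = x 0 \<and> [t = j] (mod int q)" using that(1) unfolding Z_def by simp
    then obtain t where t: "t \<ge> 0" "x t = x 0" "[t = j] (mod int q)" by (elim exE conjE)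
    have "[t = j'] (mod int q)" using t(3) that(2) by (rule cong_trans)
    thus ?thesis using t unfolding Zmem by blast
  qed
  have Zadd: "a + b \<in> Z" if "a \<in> Z" "b \<in> Z" for a b
  proof -
    from that(1)[unfolded Zmem] obtain t1 where t1: "t1 \<ge> 0" "x t1 = x 0" "[t1 = a] (mod int q)" by (elim exE conjE)
    from that(2)[unfolded Zmem] obtain t2 where t2: "t2 \<ge> 0" "x t2 = x 0" "[t2 = b] (mod int q)" by (elim exE conjE)
    obtain K where K: "[int l ^ K = 1] (mod int q)" "nat t2 < l ^ K" using bigpow[OF q] by blast
    have "x (int l ^ K * t1 + int (nat t2)) = x (int l ^ K * 0 + int (nat t2))"
      using dep[OF t1(2) K(2)] by simp
    hence f1: "x (int l ^ K * t1 + t2) = x 0" using t2 by simp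
    have f2: "int l ^ K * t1 + t2 \<ge> 0" using t1 t2 by simp
    have f3: "[int l ^ K * t1 + t2 = 1 * a + b] (mod int q)"
      using K(1) t1(3) t2(3) by (intro cong_add cong_mult) auto
    show ?thesis unfolding Zmem by (rule exI[of _ "int l ^ K * t1 + t2"]) (use f1 f2 f3 in simp)
  qed
  have Zmultn: "int n * a \<in> Z" if "a \<in> Z" for n a
    by (induction n) (auto simp: Z0 algebra_simps intro: Zadd that)
  have Zmult: "c * a \<in> Z" if "a \<in> Z" for c a
  proof -
    have "int (nat (c mod int q)) * a \<in> Z" using Zmultn that by blast
    moreover have "[int (nat (c mod int q)) * a = c * a] (mod int q)"
      using q by (intro cong_mult) (auto simp: cong_def)
    ultimately show ?thesis using Zcong by blast
  qed
  have qZ: "int q \<in> Z" using Zcong[OF Z0] by (simp add: cong_def)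
  define d where "d = (LEAST n::nat. n > 0 \<and> int n \<in> Z)"
  have dZ: "d > 0 \<and> int d \<in> Z" unfolding d_def
    by (rule LeastI[of _ q]) (use q qZ in auto)
  have dmin: "d \<le> n" if "n > 0" "int n \<in> Z" for n
    unfolding d_def by (rule Least_le) (use that in auto)
  have ddvd: "int d dvd a" if "a \<in> Z" for a
  proof -
    define r where "r = a mod int d"
    have "r = a + (- (a div int d)) * int d" by (simp add: r_def minus_div_mult_eq_mod [symmetric])
    moreover have "(- (a div int d)) * int d \<in> Z" using Zmult dZ by blast
    hence rZ': "a + (- (a div int d)) * int d \<in> Z" by (rule Zadd[OF that])
    have rZ: "r \<in> Z" unfolding \<open>r = a + (- (a div int d)) * int d\<close> by (rule rZ')
    have r: "0 \<le> r" "r < int d" using dZ by (auto simp: r_def)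
    have "r = 0"
    proof (rule ccontr)
      assume "r \<noteq> 0"
      hence "nat r > 0" using r by simp
      moreover have "int (nat r) \<in> Z" using rZ r by simp
      ultimately have "d \<le> nat r" using dmin by blast
      thus False using r by simp
    qed
    thus ?thesis by (simp add: r_def dvd_eq_mod_eq_0)
  qed
  have "d dvd q" using ddvd[OF qZ] by simp
  hence "coprime d l" using q(2) by (rule coprime_divisors[OF _ dvd_refl])
  moreover have "d dvd g0 x" unfolding g0_def
  proof (rule Gcd_greatest)
    fix n assume "n \<in> {n::nat. n \<ge> 1 \<and> x (int n) = x 0}"
    hence "int n \<in> Z" unfolding Zmem by (intro exI[of _ "int n"]) simp
    hence "int d dvd int n" by (rule ddvd)
    thus "d dvd n" by (simp only: int_dvd_int_iff)
  qed
  moreover have "d \<ge> 1" using dZ by simp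
  ultimately have "d dvd h" using height_props by blast
  then obtain c where hc: "h = d * c" by blast
  have hZ: "int h \<in> Z" using Zmult[OF conjunct2[OF dZ], of "int c"] hc by (simp add: mult.commute)
  obtain s where s: "s \<ge> 0" "x s = x J" "int (g0 x) dvd (s - J)" using nonneg_rep by blast
  have "int h dvd int (g0 x)" using height_props by simp
  hence "int h dvd (s - J)" using s(3) dvd_trans by blast
  hence "int h dvd ((J - J0) + (s - J))" using hd by (rule dvd_add[rotated])
  hence "int h dvd - ((J - J0) + (s - J))" by (simp only: dvd_minus_iff)
  moreover have "- ((J - J0) + (s - J)) = J0 - s" by simp
  ultimately have "int h dvd (J0 - s)" by simp
  then obtain c' where "J0 - s = int h * c'" by blast
  hence "J0 - s \<in> Z" using Zmult[OF hZ, of c'] by (simp add: mult.commute)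
  then obtain t where t: "t \<ge> 0" "x t = x 0" "[t = J0 - s] (mod int q)" unfolding Zmem by (elim exE conjE)
  obtain K where K: "[int l ^ K = 1] (mod int q)" "nat s < l ^ K" using bigpow[OF q] by blast
  define J' where "J' = int l ^ K * t + s"
  have "x (int l ^ K * t + int (nat s)) = x (int l ^ K * 0 + int (nat s))"
    using dep[OF t(2) K(2)] by simp
  hence "x J' = x J" using s by (simp add: J'_def)
  moreover have "[J' = 1 * (J0 - s) + s] (mod int q)" unfolding J'_def
    using K(1) t(3) by (intro cong_add cong_mult) auto
  hence "int q dvd (J' - J0)" by (simp add: cong_iff_dvd_diff)
  ultimately show ?thesis by blast
qed

lemma Estar:
  assumes "p \<ge> 1"
  shows "\<exists>K. \<forall>m n1. \<exists>j. int p dvd (j - m) \<and> x j = x (m + n1 * (int l ^ K * int h))"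
proof -
  obtain q K where qK: "q \<ge> 1" "coprime q l" "p dvd l ^ K * q"
    using factor_lemma[of l p] l2 assms by auto
  have "\<exists>j. int p dvd (j - m) \<and> x j = x (m + n1 * (int l ^ K * int h))" for m n1
  proof -
    define L where "L = int l ^ K"
    have Lpos: "L > 0" using l2 by (simp add: L_def)
    define J0 where "J0 = m div L"
    define w where "w = m mod L"
    define J where "J = J0 + n1 * int h"
    have m: "m = L * J0 + w" by (simp add: J0_def w_def)
    have w: "0 \<le> w" "w < L" using Lpos by (auto simp: w_def)
    have M: "m + n1 * (L * int h) = L * J + w" by (simp add: m J_def algebra_simps)
    have "int h dvd (J - J0)" by (simp add: J_def)
    then obtain J' where J': "int q dvd (J' - J0)" "x J' = x J" using E[OF qK(1,2)] by blast
    have wl: "nat w < l ^ K" using w by (simp add: L_def nat_less_iff)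
    have "x (int l ^ K * J' + int (nat w)) = x (int l ^ K * J + int (nat w))"
      using dep[OF J'(2) wl] .
    hence "x (L * J' + w) = x (m + n1 * (L * int h))" using w M by (simp add: L_def)
    moreover have "int p dvd (L * J' + w - m)"
    proof -
      have "L * J' + w - m = L * (J' - J0)" by (simp add: m algebra_simps)
      moreover have "int p dvd L * int q" using qK(3) by (simp add: L_def flip: of_nat_power of_nat_mult)
      moreover have "L * int q dvd L * (J' - J0)" using J'(1) by simp
      ultimately show ?thesis using dvd_trans[of "int p" "L * int q" "L * (J' - J0)"] by simp
    qed
    ultimately show ?thesis unfolding L_def by blast
  qed
  thus ?thesis by blast
qed

end


context fp begin

definition S :: "nat \<Rightarrow> int \<Rightarrow> 'a set" where
  "S K r = {x (r + n * (int l ^ K * int h)) | n. True}"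

lemma h1: "h \<ge> 1" using height_props by blast

lemma S_step:
  assumes "i < l"
  shows "graph_step \<sigma> i (S K r) = S (Suc K) (int l * r + int i)"
proof -
  have e: "\<sigma> (x (r + n * (int l ^ K * int h))) ! i
      = x (int l * r + int i + n * (int l ^ Suc K * int h))" for n
  proof -
    have "\<sigma> (x (r + n * (int l ^ K * int h))) ! i = x (int l * (r + n * (int l ^ K * int h)) + int i)"
      using fixE[OF assms] by simp
    also have "int l * (r + n * (int l ^ K * int h)) + int i = int l * r + int i + n * (int l ^ Suc K * int h)"
      by (simp add: algebra_simps)
    finally show ?thesis .
  qed
  have "graph_step \<sigma> i (S K r) = {\<sigma> (x (r + n * (int l ^ K * int h))) ! i | n. True}"
    unfolding graph_step_def S_def by blast
  also have "\<dots> = S (Suc K) (int l * r + int i)" unfolding S_def by (simp only: e)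
  finally show ?thesis .
qed

lemma S_shift: "S K (r + c * (int l ^ K * int h)) = S K r"
proof -
  have "x (r + c * (int l ^ K * int h) + n * (int l ^ K * int h)) = x (r + (c + n) * (int l ^ K * int h))" for n
    by (simp add: algebra_simps)
  moreover have "x (r + n * (int l ^ K * int h)) = x (r + c * (int l ^ K * int h) + (n - c) * (int l ^ K * int h))" for n
    by (simp add: algebra_simps)
  ultimately show ?thesis unfolding S_def by blast
qed

lemma vert_S: "C \<in> graph_vertices \<sigma> l x \<Longrightarrow> \<exists>K r. C = S K r"
proof (induction rule: graph_vertices.induct)
  case (base i)
  have "height_class h x i = S 0 (int i)" unfolding height_class_def S_def by simp
  then show ?case by blast
next
  case (step C i)
  then obtain K r where "C = S K r" by blast
  then show ?case using S_step[OF step.hyps(2)] by blast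
qed

lemma S_vert: "S K r \<in> graph_vertices \<sigma> l x"
proof (induction K arbitrary: r)
  case 0
  define i where "i = nat (r mod int h)"
  have ih: "i < h" using h1 by (simp add: i_def nat_less_iff)
  have "r = int i + (r div int h) * (int l ^ 0 * int h)" using h1 by (simp add: i_def)
  hence "S 0 r = S 0 (int i + (r div int h) * (int l ^ 0 * int h))" by (rule arg_cong[where f="S 0"])
  also have "\<dots> = S 0 (int i)" by (rule S_shift)
  also have "\<dots> = height_class h x i" unfolding height_class_def S_def by simp
  finally show ?case using graph_vertices.base[OF ih] by simp
next
  case (Suc K)
  define i where "i = nat (r mod int l)"
  have il: "i < l" using l2 by (simp add: i_def nat_less_iff)
  have "r = int l * (r div int l) + int i" using l2 by (simp add: i_def)
  hence "S (Suc K) r = S (Suc K) (int l * (r div int l) + int i)" by (rule arg_cong[where f="S (Suc K)"])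
  also have "\<dots> = graph_step \<sigma> i (S K (r div int l))" using S_step[OF il] by simp
  finally have "S (Suc K) r = graph_step \<sigma> i (S K (r div int l))" .
  thus ?case using graph_vertices.step[OF Suc.IH il] by simp
qed

lemma walk_S:
  "set is \<subseteq> {..<l} \<Longrightarrow> walk_end \<sigma> (S K r) is = S (K + length is) (foldl (\<lambda>v i. int l * v + int i) r is)"
proof (induction "is" arbitrary: K r)
  case Nil then show ?case by (simp add: walk_end_def)
next
  case (Cons i "is")
  have "walk_end \<sigma> (S K r) (i # is) = walk_end \<sigma> (graph_step \<sigma> i (S K r)) is"
    by (simp add: walk_end_def)
  also have "\<dots> = walk_end \<sigma> (S (Suc K) (int l * r + int i)) is" using Cons.prems S_step by simp
  also have "\<dots> = S (Suc K + length is) (foldl (\<lambda>v i. int l * v + int i) (int l * r + int i) is)"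
    using Cons by simp
  finally show ?case by simp
qed

lemma digits: "w < l ^ N \<Longrightarrow> \<exists>is. set is \<subseteq> {..<l} \<and> length is = N \<and>
    foldl (\<lambda>v i. int l * v + int i) r is = int l ^ N * r + int w"
proof (induction N arbitrary: w)
  case 0 then show ?case by simp
next
  case (Suc N)
  define w1 where "w1 = w div l"
  define w0 where "w0 = w mod l"
  have lpos: "l > 0" using l2 by simp
  have w: "w = w1 * l + w0" by (simp add: w1_def w0_def)
  have w0l: "w0 < l" using lpos by (simp add: w0_def)
  have w1l: "w1 < l ^ N" using Suc.prems lpos unfolding w1_def
    by (simp add: less_mult_imp_div_less mult.commute)
  obtain is1 where is1: "set is1 \<subseteq> {..<l}" "length is1 = N"
    "foldl (\<lambda>v i. int l * v + int i) r is1 = int l ^ N * r + int w1" using Suc.IH[OF w1l] by blast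
  show ?case
    by (rule exI[of _ "is1 @ [w0]"]) (use is1 w0l in \<open>simp add: w algebra_simps\<close>)
qed

lemma S_nonempty: "x r \<in> S K r" unfolding S_def by (auto intro: exI[of _ 0])

end

lemma periodic_mult:
  fixes y :: "int \<Rightarrow> 'b"
  assumes "\<forall>n. y (n + p) = y n"
  shows "y (n + c * p) = y n"
proof -
  have nat: "y (n + int k * p) = y n" for n k
  proof (induction k)
    case 0 then show ?case by simp
  next
    case (Suc k)
    have "y (n + int (Suc k) * p) = y ((n + int k * p) + p)" by (simp add: algebra_simps)
    also have "\<dots> = y (n + int k * p)" using assms by blast
    finally show ?case using Suc by simp
  qed
  show ?thesis
  proof (cases "c \<ge> 0")
    case True then show ?thesis using nat[of n "nat c"] by simp
  next
    case False
    have "y (n + c * p + int (nat (-c)) * p) = y (n + c * p)" using nat by blast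
    thus ?thesis using False by (simp add: algebra_simps)
  qed
qed




theorem mainTheorem15:
  fixes \<sigma> :: "'a::finite \<Rightarrow> 'a list" and l :: nat and x :: "int \<Rightarrow> 'a"
    and \<phi> :: "'a \<Rightarrow> 'b" and y :: "int \<Rightarrow> 'b"
  assumes "primitive \<sigma>" and "constant_length \<sigma> l" and "l \<ge> 2"
    and "is_fixed_point \<sigma> l x" and "admissible \<sigma> x"
    and "nonperiodic_subshift (subshift_gen x)"
    and "y = \<phi> \<circ> x"
  shows "((\<exists>p::int\<ge>1. \<exists>k::int. \<exists>b. \<forall>n::int. y (k + n * p) = b)
            \<longleftrightarrow> (\<exists>C\<in>graph_vertices \<sigma> l x. \<exists>b. \<phi> ` C = {b}))
      \<and> (periodic_seq y
            \<longleftrightarrow> (\<exists>N::nat. \<forall>C\<in>graph_vertices \<sigma> l x. \<forall>is. set is \<subseteq> {..<l} \<and> length is \<ge> N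
                   \<longrightarrow> (\<exists>b. \<phi> ` walk_end \<sigma> C is = {b})))"
proof -
  interpret fp \<sigma> l x using assms(1-5) by unfold_locales auto
  have Lpos: "int l ^ K * int h \<ge> 1" for K
  proof -
    have "int l ^ K \<ge> 1" using assms(3) by simp
    moreover have "int h \<ge> 1" using h1 by simp
    hence "1 * 1 \<le> int l ^ K * int h" using \<open>int l ^ K \<ge> 1\<close> by (intro mult_mono) auto
    thus ?thesis by simp
  qed
  have P1: "(\<exists>p::int\<ge>1. \<exists>k::int. \<exists>b. \<forall>n::int. y (k + n * p) = b)
            \<longleftrightarrow> (\<exists>C\<in>graph_vertices \<sigma> l x. \<exists>b. \<phi> ` C = {b})"
  proof
    assume "\<exists>p::int\<ge>1. \<exists>k::int. \<exists>b. \<forall>n::int. y (k + n * p) = b"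
    then obtain p k b where p: "p \<ge> 1" and kb: "\<forall>n. y (k + n * p) = b" by blast
    obtain K where K: "\<forall>m n1. \<exists>j. p dvd (j - m) \<and> x j = x (m + n1 * (int l ^ K * int h))"
    proof -
      have "nat p \<ge> 1" using p by simp
      hence "\<exists>K. \<forall>m n1. \<exists>j. p dvd (j - m) \<and> x j = x (m + n1 * (int l ^ K * int h))"
        using Estar[of "nat p"] p by simp
      then obtain K0 where "\<forall>m n1. \<exists>j. p dvd (j - m) \<and> x j = x (m + n1 * (int l ^ K0 * int h))"
        by (erule exE)
      thus ?thesis by (rule that)
    qed
    have im: "\<phi> z = b" if "z \<in> S K k" for z
    proof -
      from that obtain n where z: "z = x (k + n * (int l ^ K * int h))" unfolding S_def by blast
      obtain j where j: "p dvd (j - k)" "x j = z" using K z by blast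
      then obtain c where "j - k = p * c" using p by (auto elim: dvdE)
      hence "j = k + p * c" by linarith
      hence "j = k + c * p" by (simp only: mult.commute)
      hence "y j = b" using kb by simp
      thus ?thesis using assms(7) j(2) by simp
    qed
    have "\<phi> ` S K k = {b}" using im S_nonempty[of k K] by blast
    thus "\<exists>C\<in>graph_vertices \<sigma> l x. \<exists>b. \<phi> ` C = {b}" using S_vert by blast
  next
    assume "\<exists>C\<in>graph_vertices \<sigma> l x. \<exists>b. \<phi> ` C = {b}"
    then obtain C b where C: "C \<in> graph_vertices \<sigma> l x" "\<phi> ` C = {b}" by blast
    obtain K r where Cr: "C = S K r" using vert_S C(1) by blast
    have "\<forall>n. y (r + n * (int l ^ K * int h)) = b"
    proof
      fix n
      have "x (r + n * (int l ^ K * int h)) \<in> C" unfolding Cr S_def by blast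
      thus "y (r + n * (int l ^ K * int h)) = b" using C(2) assms(7) by auto
    qed
    thus "\<exists>p::int\<ge>1. \<exists>k::int. \<exists>b. \<forall>n::int. y (k + n * p) = b" using Lpos by blast
  qed
  have P2: "periodic_seq y
            \<longleftrightarrow> (\<exists>N::nat. \<forall>C\<in>graph_vertices \<sigma> l x. \<forall>is. set is \<subseteq> {..<l} \<and> length is \<ge> N
                   \<longrightarrow> (\<exists>b. \<phi> ` walk_end \<sigma> C is = {b}))"
  proof
    assume "periodic_seq y"
    then obtain p :: int where p: "p \<ge> 1" "\<forall>n. y (n + p) = y n" unfolding periodic_seq_def by blast
    obtain K where K: "\<forall>m n1. \<exists>j. p dvd (j - m) \<and> x j = x (m + n1 * (int l ^ K * int h))"
    proof -
      have "nat p \<ge> 1" using p by simp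
      hence "\<exists>K. \<forall>m n1. \<exists>j. p dvd (j - m) \<and> x j = x (m + n1 * (int l ^ K * int h))"
        using Estar[of "nat p"] p by simp
      then obtain K0 where "\<forall>m n1. \<exists>j. p dvd (j - m) \<and> x j = x (m + n1 * (int l ^ K0 * int h))"
        by (erule exE)
      thus ?thesis by (rule that)
    qed
    have "\<forall>C\<in>graph_vertices \<sigma> l x. \<forall>is. set is \<subseteq> {..<l} \<and> length is \<ge> K
                   \<longrightarrow> (\<exists>b. \<phi> ` walk_end \<sigma> C is = {b})"
    proof (intro ballI allI impI)
      fix C "is" assume C: "C \<in> graph_vertices \<sigma> l x" and isl: "set is \<subseteq> {..<l} \<and> length is \<ge> K"
      obtain K0 r where Cr: "C = S K0 r" using vert_S C by blast
      define K' where "K' = K0 + length is"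
      define r' where "r' = foldl (\<lambda>v i. int l * v + int i) r is"
      have we: "walk_end \<sigma> C is = S K' r'" using walk_S isl Cr by (simp add: K'_def r'_def)
      have KK: "K \<le> K'" using isl by (simp add: K'_def)
      have im: "\<phi> z = y r'" if "z \<in> S K' r'" for z
      proof -
        from that obtain n where z: "z = x (r' + n * (int l ^ K' * int h))" unfolding S_def by blast
        have "int l ^ K' = int l ^ K * int l ^ (K' - K)" using KK by (simp add: power_add[symmetric])
        hence z': "z = x (r' + (n * int l ^ (K' - K)) * (int l ^ K * int h))" using z
          by (simp add: algebra_simps)
        obtain j where j: "p dvd (j - r')" "x j = z" using K z' by blast
        then obtain c where "j - r' = p * c" using p by (auto elim: dvdE)
        hence "j = r' + p * c" by linarith
        hence "j = r' + c * p" by (simp only: mult.commute)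
        hence "y j = y r'" using periodic_mult[OF p(2)] by simp
        thus ?thesis using assms(7) j(2) by simp
      qed
      have "\<phi> (x r') = y r'" using assms(7) by simp
      hence "\<phi> ` S K' r' = {y r'}" using im S_nonempty[of r' K'] by (auto intro: rev_image_eqI)
      thus "\<exists>b. \<phi> ` walk_end \<sigma> C is = {b}" using we by blast
    qed
    thus "\<exists>N::nat. \<forall>C\<in>graph_vertices \<sigma> l x. \<forall>is. set is \<subseteq> {..<l} \<and> length is \<ge> N
                   \<longrightarrow> (\<exists>b. \<phi> ` walk_end \<sigma> C is = {b})" by blast
  next
    assume "\<exists>N::nat. \<forall>C\<in>graph_vertices \<sigma> l x. \<forall>is. set is \<subseteq> {..<l} \<and> length is \<ge> N
                   \<longrightarrow> (\<exists>b. \<phi> ` walk_end \<sigma> C is = {b})"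
    then obtain N where N: "\<forall>C\<in>graph_vertices \<sigma> l x. \<forall>is. set is \<subseteq> {..<l} \<and> length is \<ge> N
                   \<longrightarrow> (\<exists>b. \<phi> ` walk_end \<sigma> C is = {b})" by blast
    define L where "L = int l ^ N * int h"
    have "y (m + L) = y m" for m
    proof -
      have lp: "int l ^ N > 0" using assms(3) by simp
      define a where "a = m div int l ^ N"
      define w where "w = nat (m mod int l ^ N)"
      have wl: "w < l ^ N" using lp by (simp add: w_def nat_less_iff)
      have m: "m = int l ^ N * a + int w" using lp by (simp add: a_def w_def)
      obtain "is" where isl: "set is \<subseteq> {..<l}" "length is = N"
        "foldl (\<lambda>v i. int l * v + int i) a is = int l ^ N * a + int w" using digits[OF wl] by blast
      have "walk_end \<sigma> (S 0 a) is = S N m" using walk_S[OF isl(1), of 0 a] isl m by simp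
      moreover have "\<exists>b. \<phi> ` walk_end \<sigma> (S 0 a) is = {b}" using N S_vert[of 0 a] isl(1,2) by simp
      ultimately obtain b where b: "\<phi> ` S N m = {b}" by auto
      have "x m \<in> S N m" by (rule S_nonempty)
      moreover have "x (m + L) \<in> S N m" unfolding S_def L_def by (auto intro: exI[of _ 1])
      ultimately have "\<phi> (x m) \<in> \<phi> ` S N m" "\<phi> (x (m + L)) \<in> \<phi> ` S N m" by simp_all
      hence "\<phi> (x m) = b" "\<phi> (x (m + L)) = b" using b by simp_all
      thus ?thesis using assms(7) by simp
    qed
    thus "periodic_seq y" unfolding periodic_seq_def using Lpos[of N] L_def by blast
  qed
  show ?thesis using P1 P2 by blast
qed


end
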